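(* In the setting below (even case, with $T$ defined via normalizing matrices $\lambda_k$ homogeneous of degree $-1$ as described), for every $\mu\neq0$ and $\eta\in\mathbb C$, $$\det\big(Q_0(\mu)Q_1(\mu)\cdots Q_{N-1}(\mu)-\eta I_{nm}\big)$$ takes the same value at the coordinates $(a_k^i)$ and at their images $(T(a_k^i))$; i.e. $T$ preserves the spectral curve $\det(Q_0(\mu)\cdots Q_{N-1}(\mu)-\eta I_{nm})=0$.
   Context: Integers $n\ge1$, $s\ge2$, $m=2s$; $a_k^0,\dots,a_k^{m-1}$ are $n\times n$ matrices, $N$-periodic in $k$. $Q_k(\mu)$ is the $mn\times mn$ block matrix with $I_n$ in blocks $(i+1,i)$, last block column $(a_k^0;\mu a_k^1;a_k^2;\mu a_k^3;\dots;a_k^{2s-2};\mu a_k^{2s-1})$ and $O_n$ elsewhere; $Q_k=Q_k(1)$. $r_k=(O_n;a_k^1;O_n;\dots;O_n;a_k^{2s-1})$, $F^{(k)}_0=r_k$, $F^{(k)}_\ell=Q_k\cdots Q_{k+\ell-1}r_{k+\ell}$, $N_k=(F^{(k)}_0,\dots,F^{(k)}_{m-1})$, assumed invertible. $(\lambda_k)$ are $N$-periodic invertible $n\times n$ matrices whose entries are rational functions of the $a$'s homogeneous of degree $-1$ under the scaling $a^{2r+1}\mapsto\mu a^{2r+1}$, $a^{2r}\mapsto a^{2r}$; $\Lambda_k=\mathrm{diag}(\lambda_k,\dots,\lambda_{k+m-1})$. The map $T$ sends $a_k^i$ to the $i$-th $n\times n$ block (counting from $0$) of the last block column of $\Lambda_k^{-1}N_k^{-1}Q_kN_{k+1}\Lambda_{k+1}$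 (the Grassmannian pentagram map on the moduli space of twisted $N$-gons in $\mathrm{Gr}(n,2sn)$ written in these coordinates). *)

theory Defs
  imports "Jordan_Normal_Form.Gauss_Jordan_Elimination" "Jordan_Normal_Form.Determinant"
begin

text \<open>Coordinates: a k i is the n x n matrix a_k^i (k the vertex index, i = 0..m-1).
  All block matrices are mn x mn; row/column index p corresponds to block p div n,
  entry p mod n inside the block.\<close>

type_synonym coords = "nat \<Rightarrow> nat \<Rightarrow> complex mat"

definition minv :: "complex mat \<Rightarrow> complex mat" where
  "minv A = the (mat_inverse A)"

text \<open>Q_k(mu): identity blocks at (i+1,i), last block column
  (a_k^0; mu a_k^1; a_k^2; mu a_k^3; ...), zero elsewhere.\<close>
definition Qmat :: "nat \<Rightarrow> nat \<Rightarrow> coords \<Rightarrow> nat \<Rightarrow> complex \<Rightarrow> complex mat" where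
  "Qmat n m a k \<mu> = mat (m*n) (m*n) (\<lambda>(p,q).
     if q div n = m - 1 then (if odd (p div n) then \<mu> else 1) * (a k (p div n) $$ (p mod n, q mod n))
     else if p div n = q div n + 1 \<and> p mod n = q mod n then 1 else 0)"

fun Qprod :: "nat \<Rightarrow> nat \<Rightarrow> coords \<Rightarrow> nat \<Rightarrow> nat \<Rightarrow> complex \<Rightarrow> complex mat" where
  "Qprod n m a k 0 \<mu> = 1\<^sub>m (m*n)"
| "Qprod n m a k (Suc l) \<mu> = Qprod n m a k l \<mu> * Qmat n m a (k + l) \<mu>"

definition rvec :: "nat \<Rightarrow> nat \<Rightarrow> coords \<Rightarrow> nat \<Rightarrow> complex mat" where
  "rvec n m a k = mat (m*n) n (\<lambda>(p,q).
     if odd (p div n) then a k (p div n) $$ (p mod n, q) else 0)"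

definition Fvec :: "nat \<Rightarrow> nat \<Rightarrow> coords \<Rightarrow> nat \<Rightarrow> nat \<Rightarrow> complex mat" where
  "Fvec n m a k l = Qprod n m a k l 1 * rvec n m a (k + l)"

definition Nmat :: "nat \<Rightarrow> nat \<Rightarrow> coords \<Rightarrow> nat \<Rightarrow> complex mat" where
  "Nmat n m a k = mat (m*n) (m*n) (\<lambda>(p,q). Fvec n m a k (q div n) $$ (p, q mod n))"

definition Lmat :: "nat \<Rightarrow> nat \<Rightarrow> (nat \<Rightarrow> complex mat) \<Rightarrow> nat \<Rightarrow> complex mat" where
  "Lmat n m lam k = mat (m*n) (m*n) (\<lambda>(p,q).
     if p div n = q div n then lam (k + p div n) $$ (p mod n, q mod n) else 0)"

definition Tmap :: "nat \<Rightarrow> nat \<Rightarrow> (coords \<Rightarrow> nat \<Rightarrow> complex mat) \<Rightarrow> coords \<Rightarrow> coords" where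
  "Tmap n m lam a k i =
     (let M = minv (Lmat n m (lam a) k) * minv (Nmat n m a k) * Qmat n m a k 1
              * Nmat n m a (Suc k) * Lmat n m (lam a) (Suc k)
      in mat n n (\<lambda>(p,q). M $$ (i*n + p, (m - 1)*n + q)))"

definition scale_odd :: "complex \<Rightarrow> coords \<Rightarrow> coords" where
  "scale_odd \<mu> a k i = (if odd i then \<mu> \<cdot>\<^sub>m a k i else a k i)"

end

theory Submission
  imports Defs
begin

lemma mult_entry:
  assumes "A \<in> carrier_mat d e" "B \<in> carrier_mat e f" "i < d" "j < f"
  shows "(A*B)$$(i,j) = (\<Sum>r<e. A$$(i,r) * B$$(r,j))"
  using assms by (simp add: scalar_prod_def lessThan_atLeast0)

lemma sum_blocks: "(\<Sum>r<m*n. f r) = (\<Sum>i<m. \<Sum>w<n. f (i*n+w::nat))"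
proof (induction m)
  case 0 then show ?case by simp
next
  case (Suc m)
  have eq: "{..<Suc m * n} = {..<m*n} \<union> {m*n..<m*n+n}" by auto
  have "(\<Sum>r<Suc m*n. f r) = (\<Sum>r<m*n. f r) + (\<Sum>r\<in>{m*n..<m*n+n}. f r)"
    by (simp only: eq) (rule sum.union_disjoint; auto)
  also have "(\<Sum>r\<in>{m*n..<m*n+n}. f r) = (\<Sum>w<n. f (m*n+w))"
    using sum.shift_bounds_nat_ivl[of f 0 "m*n" n] by (simp add: lessThan_atLeast0 add.commute)
  finally show ?case using Suc by simp
qed

lemma blk_div[simp]: "u < n \<Longrightarrow> (i*n+u) div (n::nat) = i"
  by simp
lemma blk_mod[simp]: "u < n \<Longrightarrow> (i*n+u) mod (n::nat) = u"
  by simp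
lemma blk_lt: "i < m \<Longrightarrow> u < n \<Longrightarrow> i*n+u < m*(n::nat)"
proof -
  assume "i < m" "u < n"
  then have "i*n+u < Suc i * n" by simp
  also have "\<dots> \<le> m*n" using \<open>i<m\<close> by (intro mult_le_mono1) simp
  finally show ?thesis .
qed
lemma divmod_iff: "u < n \<Longrightarrow> (r div n = j \<and> r mod n = u) \<longleftrightarrow> r = j*n+(u::nat)"
  by (metis blk_div blk_mod div_mult_mod_eq)
lemma div_lt: "r < m*n \<Longrightarrow> r div n < (m::nat)"
  by (simp add: less_mult_imp_div_less)
lemma mod_lt: "r < m*n \<Longrightarrow> r mod n < (n::nat)"
  by (cases "n = 0") auto

lemma Qmat_carrier[simp]: "Qmat n m b k \<mu> \<in> carrier_mat (m*n) (m*n)"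
  by (simp add: Qmat_def)
lemma Qprod_carrier[simp]: "Qprod n m b k l \<mu> \<in> carrier_mat (m*n) (m*n)"
  by (induction l) auto
lemma rvec_carrier[simp]: "rvec n m b k \<in> carrier_mat (m*n) n"
  by (simp add: rvec_def)
lemma Lmat_carrier[simp]: "Lmat n m L k \<in> carrier_mat (m*n) (m*n)"
  by (simp add: Lmat_def)

lemma Qprod_shift: "Qprod n m b k (Suc l) \<mu> = Qmat n m b k \<mu> * Qprod n m b (Suc k) l \<mu>"
proof (induction l)
  case 0 then show ?case
    using left_mult_one_mat[OF Qmat_carrier[of n m b k \<mu>]] right_mult_one_mat[OF Qmat_carrier[of n m b k \<mu>]]
    by simp
next
  case (Suc l)
  have "Qprod n m b k (Suc (Suc l)) \<mu> = Qprod n m b k (Suc l) \<mu> * Qmat n m b (k + Suc l) \<mu>" by simp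
  also have "\<dots> = (Qmat n m b k \<mu> * Qprod n m b (Suc k) l \<mu>) * Qmat n m b (Suc k + l) \<mu>"
    using Suc by simp
  also have "\<dots> = Qmat n m b k \<mu> * (Qprod n m b (Suc k) l \<mu> * Qmat n m b (Suc k + l) \<mu>)"
    by (rule assoc_mult_mat[OF Qmat_carrier Qprod_carrier Qmat_carrier])
  finally show ?case by simp
qed

lemma Qprod_Suc_col:
  assumes "p < m*n" "Suc i < m" "u < n"
  shows "Qprod n m b k (Suc l) \<mu> $$ (p, i*n+u) = Qprod n m b k l \<mu> $$ (p, (Suc i)*n+u)"
proof -
  have lt: "i*n+u < m*n" "Suc i*n+u < m*n" using assms blk_lt[of i m u n] blk_lt[of "Suc i" m u n] by auto
  have "Qprod n m b k (Suc l) \<mu> $$ (p, i*n+u)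
      = (Qprod n m b k l \<mu> * Qmat n m b (k+l) \<mu>) $$ (p, i*n+u)" by simp
  also have "\<dots> = (\<Sum>r<m*n. Qprod n m b k l \<mu> $$(p,r) * Qmat n m b (k+l) \<mu> $$ (r, i*n+u))"
    by (rule mult_entry[OF Qprod_carrier Qmat_carrier assms(1) lt(1)])
  also have "\<dots> = (\<Sum>r<m*n. if r = Suc i * n + u then Qprod n m b k l \<mu> $$(p,r) else 0)"
  proof (rule sum.cong)
    fix r assume "r \<in> {..<m*n}"
    then show "Qprod n m b k l \<mu> $$(p,r) * Qmat n m b (k+l) \<mu> $$ (r, i*n+u)
        = (if r = Suc i * n + u then Qprod n m b k l \<mu> $$(p,r) else 0)"
      using assms lt divmod_iff[of u n r "Suc i"] by (auto simp: Qmat_def)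
  qed simp
  also have "\<dots> = Qprod n m b k l \<mu> $$ (p, (Suc i)*n+u)" using lt by simp
  finally show ?thesis .
qed

lemma Qprod_blk:
  assumes "p < m*n" "i < m" "u < n"
  shows "Qprod n m b k l \<mu> $$ (p, i*n+u) = Qprod n m b k (l+i) \<mu> $$ (p, u)"
  using assms
proof (induction i arbitrary: l)
  case 0 then show ?case by simp
next
  case (Suc i)
  have "Qprod n m b k l \<mu> $$ (p, Suc i*n+u) = Qprod n m b k (Suc l) \<mu> $$ (p, i*n+u)"
    by (rule Qprod_Suc_col[symmetric]) (use Suc.prems in auto)
  also have "\<dots> = Qprod n m b k (Suc l + i) \<mu> $$ (p, u)" using Suc.IH[of "Suc l"] Suc.prems by (simp del: Qprod.simps)
  finally show ?case by (simp del: Qprod.simps)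
qed

lemma reidx:
  fixes m l :: nat
  assumes "even m" "l \<le> m"
  shows "(\<Sum>c<m. if l \<le> 2*c+1 \<and> 2*c+1 < l+m then h (2*c+1-l) else 0)
       = (\<Sum>i<m. if odd (i+l) then h i else (0::'a::comm_monoid_add))"
proof -
  let ?S = "{c\<in>{..<m}. l \<le> 2*c+1 \<and> 2*c+1 < l+m}"
  let ?T = "{i\<in>{..<m}. odd (i+l)}"
  have bij: "bij_betw (\<lambda>c. 2*c+1-l) ?S ?T"
  proof (rule bij_betw_imageI)
    show "inj_on (\<lambda>c. 2*c+1-l) ?S" by (auto simp: inj_on_def)
    show "(\<lambda>c. 2*c+1-l) ` ?S = ?T"
    proof
      show "(\<lambda>c. 2*c+1-l) ` ?S \<subseteq> ?T"
      proof
        fix x assume "x \<in> (\<lambda>c. 2*c+1-l) ` ?S"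
        then obtain c where c: "c \<in> ?S" "x = 2*c+1-l" by blast
        then have "x + l = 2*c+1" by auto
        then show "x \<in> ?T" using c by auto
      qed
      show "?T \<subseteq> (\<lambda>c. 2*c+1-l) ` ?S"
      proof
        fix i assume i: "i \<in> ?T"
        let ?c = "(i+l) div 2"
        have c1: "2*?c+1 = i+l" using i odd_two_times_div_two_succ[of "i+l"] by auto
        have "?c < m" using c1 i assms by auto
        then have "?c \<in> ?S" using c1 i by auto
        moreover have "i = 2*?c+1-l" using c1 by simp
        ultimately show "i \<in> (\<lambda>c. 2*c+1-l) ` ?S" by blast
      qed
    qed
  qed
  have "(\<Sum>c<m. if l \<le> 2*c+1 \<and> 2*c+1 < l+m then h (2*c+1-l) else 0) = (\<Sum>c\<in>?S. h (2*c+1-l))"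
    by (rule sum.inter_filter[symmetric]) simp
  also have "\<dots> = (\<Sum>i\<in>?T. h i)" by (rule sum.reindex_bij_betw[OF bij])
  also have "\<dots> = (\<Sum>i<m. if odd (i+l) then h i else 0)" by (rule sum.inter_filter) simp
  finally show ?thesis .
qed

declare Qprod.simps(2)[simp del]

definition cof :: "complex \<Rightarrow> nat \<Rightarrow> complex" where
  "cof \<mu> i = (if odd i then \<mu> else 1)"

locale PM =
  fixes n m :: nat and a :: coords
  assumes n1: "n \<ge> 1" and m2: "m \<ge> 2" and meven: "even m"
    and acar: "\<And>k i. a k i \<in> carrier_mat n n"
begin

lemma phi_rec:
  assumes "p < m*n" "u < n"
  shows "Qprod n m a k (l+m) \<mu> $$ (p,u)
     = (\<Sum>i<m. cof \<mu> i * (\<Sum>w<n. Qprod n m a k (l+i) \<mu> $$ (p,w) * a (k+l) i $$ (w,u)))"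
proof -
  have m1: "m-1 < m" "(m-1)*n+u < m*n" using m2 assms blk_lt[of "m-1" m u n] by auto
  have "Qprod n m a k (l+m) \<mu> $$ (p,u) = Qprod n m a k (Suc l) \<mu> $$ (p, (m-1)*n+u)"
    using Qprod_blk[of p m n "m-1" u a k "Suc l" \<mu>] assms m1 m2 by simp
  also have "\<dots> = (\<Sum>r<m*n. Qprod n m a k l \<mu> $$(p,r) * Qmat n m a (k+l) \<mu> $$ (r, (m-1)*n+u))"
    unfolding Qprod.simps(2) by (rule mult_entry[OF Qprod_carrier Qmat_carrier assms(1) m1(2)])
  also have "\<dots> = (\<Sum>i<m. \<Sum>w<n. Qprod n m a k l \<mu> $$(p,i*n+w) * Qmat n m a (k+l) \<mu> $$ (i*n+w, (m-1)*n+u))"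
    by (rule sum_blocks)
  also have "\<dots> = (\<Sum>i<m. \<Sum>w<n. Qprod n m a k (l+i) \<mu> $$ (p,w) * (cof \<mu> i * a (k+l) i $$ (w,u)))"
  proof (intro sum.cong refl)
    fix i w assume iw: "i \<in> {..<m}" "w \<in> {..<n}"
    then have lt: "i*n+w < m*n" using blk_lt[of i m w n] by auto
    show "Qprod n m a k l \<mu> $$(p,i*n+w) * Qmat n m a (k+l) \<mu> $$ (i*n+w, (m-1)*n+u)
        = Qprod n m a k (l+i) \<mu> $$ (p,w) * (cof \<mu> i * a (k+l) i $$ (w,u))"
      using iw lt m1 assms Qprod_blk[of p m n i w a k l \<mu>] by (simp add: Qmat_def cof_def)
  qed
  also have "\<dots> = (\<Sum>i<m. cof \<mu> i * (\<Sum>w<n. Qprod n m a k (l+i) \<mu> $$ (p,w) * a (k+l) i $$ (w,u)))"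
    by (simp add: sum_distrib_left mult.left_commute)
  finally show ?thesis .
qed

definition Fm where "Fm k l \<mu> = Qprod n m a k l \<mu> * rvec n m a (k+l)"

lemma Fm_carrier[simp]: "Fm k l \<mu> \<in> carrier_mat (m*n) n"
  unfolding Fm_def by (rule mult_carrier_mat[of _ _ "m*n"]) auto

lemma Fm_entry:
  assumes "p < m*n" "u < n"
  shows "Fm k l \<mu> $$ (p,u)
     = (\<Sum>i<m. if odd i then (\<Sum>w<n. Qprod n m a k (l+i) \<mu> $$ (p,w) * a (k+l) i $$ (w,u)) else 0)"
proof -
  have "Fm k l \<mu> $$ (p,u) = (\<Sum>r<m*n. Qprod n m a k l \<mu> $$(p,r) * rvec n m a (k+l) $$ (r, u))"
    unfolding Fm_def using assms by (simp add: mult_entry[of _ "m*n" "m*n" _ n])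
  also have "\<dots> = (\<Sum>i<m. \<Sum>w<n. Qprod n m a k l \<mu> $$(p,i*n+w) * rvec n m a (k+l) $$ (i*n+w, u))"
    by (rule sum_blocks)
  also have "\<dots> = (\<Sum>i<m. if odd i then (\<Sum>w<n. Qprod n m a k (l+i) \<mu> $$ (p,w) * a (k+l) i $$ (w,u)) else 0)"
  proof (rule sum.cong[OF refl])
    fix i assume i: "i \<in> {..<m}"
    have "(\<Sum>w<n. Qprod n m a k l \<mu> $$(p,i*n+w) * rvec n m a (k+l) $$ (i*n+w, u))
        = (\<Sum>w<n. if odd i then Qprod n m a k (l+i) \<mu> $$ (p,w) * a (k+l) i $$ (w,u) else 0)"
    proof (rule sum.cong[OF refl])
      fix w assume w: "w \<in> {..<n}"
      then have lt: "i*n+w < m*n" using i blk_lt by auto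
      show "Qprod n m a k l \<mu> $$(p,i*n+w) * rvec n m a (k+l) $$ (i*n+w, u)
          = (if odd i then Qprod n m a k (l+i) \<mu> $$ (p,w) * a (k+l) i $$ (w,u) else 0)"
        using i w lt assms Qprod_blk[of p m n i w a k l \<mu>] by (simp add: rvec_def)
    qed
    also have "\<dots> = (if odd i then (\<Sum>w<n. Qprod n m a k (l+i) \<mu> $$ (p,w) * a (k+l) i $$ (w,u)) else 0)"
      by simp
    finally show "(\<Sum>w<n. Qprod n m a k l \<mu> $$(p,i*n+w) * rvec n m a (k+l) $$ (i*n+w, u))
        = (if odd i then (\<Sum>w<n. Qprod n m a k (l+i) \<mu> $$ (p,w) * a (k+l) i $$ (w,u)) else 0)" .
  qed
  finally show ?thesis .
qed


definition tt where
  "tt k l c w u = (if odd l \<and> 2*c+1 = l+m \<and> w = u then 1 else 0)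
     + (if l \<le> 2*c+1 \<and> 2*c+1 < l+m then (if odd l then -1 else 1) * a (k+l) (2*c+1-l) $$ (w,u) else 0)"

lemma WT:
  assumes lm: "l \<le> m" and p: "p < m*n" and u: "u < n"
  shows "(\<Sum>c<m. \<Sum>w<n. Qprod n m a k (2*c+1) \<mu> $$ (p,w) * tt k l c w u) = cof \<mu> l * Fm k l \<mu> $$ (p,u)"
proof -
  define A where "A i = (\<Sum>w<n. Qprod n m a k (l+i) \<mu> $$ (p,w) * a (k+l) i $$ (w,u))" for i
  let ?S1 = "(\<Sum>c<m. \<Sum>w<n. Qprod n m a k (2*c+1) \<mu> $$ (p,w) * (if odd l \<and> 2*c+1 = l+m \<and> w = u then 1 else 0))"
  let ?S2 = "(\<Sum>c<m. \<Sum>w<n. Qprod n m a k (2*c+1) \<mu> $$ (p,w) * (if l \<le> 2*c+1 \<and> 2*c+1 < l+m then (if odd l then -1 else 1) * a (k+l) (2*c+1-l) $$ (w,u) else 0))"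
  have split: "(\<Sum>c<m. \<Sum>w<n. Qprod n m a k (2*c+1) \<mu> $$ (p,w) * tt k l c w u) = ?S1 + ?S2"
    by (simp add: tt_def distrib_left sum.distrib)
  have S1: "?S1 = (if odd l then Qprod n m a k (l+m) \<mu> $$ (p,u) else 0)"
  proof (cases "odd l")
    case False then show ?thesis by simp
  next
    case True
    define c0 where "c0 = (l+m) div 2"
    have oddlm: "odd (l+m)" using True meven by simp
    have c0: "2*c0+1 = l+m" using oddlm odd_two_times_div_two_succ[of "l+m"] unfolding c0_def by simp
    have "l \<noteq> m" using True meven by auto
    then have c0m: "c0 < m" using c0 lm by linarith
    have "?S1 = (\<Sum>c<m. if c = c0 then Qprod n m a k (2*c+1) \<mu> $$ (p,u) else 0)"
    proof (rule sum.cong[OF refl])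
      fix c assume "c \<in> {..<m}"
      show "(\<Sum>w<n. Qprod n m a k (2*c+1) \<mu> $$ (p,w) * (if odd l \<and> 2*c+1 = l+m \<and> w = u then 1 else 0))
          = (if c = c0 then Qprod n m a k (2*c+1) \<mu> $$ (p,u) else 0)"
      proof (cases "c = c0")
        case True
        then show ?thesis using c0 \<open>odd l\<close> u by (simp add: if_distrib cong: if_cong)
      next
        case False
        then have "2*c+1 \<noteq> l+m" using c0 by auto
        then show ?thesis using False by simp
      qed
    qed
    also have "\<dots> = Qprod n m a k (l+m) \<mu> $$ (p,u)" using c0m c0 by simp
    finally show ?thesis using True by simp
  qed
  have S2: "?S2 = (\<Sum>i<m. if odd (i+l) then (if odd l then -1 else 1) * A i else 0)"
  proof -
    have "?S2 = (\<Sum>c<m. if l \<le> 2*c+1 \<and> 2*c+1 < l+m then (if odd l then -1 else 1) * A (2*c+1-l) else 0)"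
    proof (rule sum.cong[OF refl])
      fix c assume "c \<in> {..<m}"
      show "(\<Sum>w<n. Qprod n m a k (2*c+1) \<mu> $$ (p,w) * (if l \<le> 2*c+1 \<and> 2*c+1 < l+m then (if odd l then -1 else 1) * a (k+l) (2*c+1-l) $$ (w,u) else 0))
          = (if l \<le> 2*c+1 \<and> 2*c+1 < l+m then (if odd l then -1 else 1) * A (2*c+1-l) else 0)"
      proof (cases "l \<le> 2*c+1 \<and> 2*c+1 < l+m")
        case True
        then have e: "l + (2*c+1-l) = 2*c+1" by simp
        show ?thesis using True unfolding A_def e by (simp add: sum_distrib_left mult.left_commute)
      next
        case False
        show ?thesis unfolding if_not_P[OF False] by simp
      qed
    qed
    also have "\<dots> = (\<Sum>i<m. if odd (i+l) then (if odd l then -1 else 1) * A i else 0)"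
      by (rule reidx[OF meven lm])
    finally show ?thesis .
  qed
  have F: "Fm k l \<mu> $$ (p,u) = (\<Sum>i<m. if odd i then A i else 0)"
    unfolding A_def by (rule Fm_entry[OF p u])
  show ?thesis
  proof (cases "odd l")
    case False
    have "?S2 = (\<Sum>i<m. if odd i then A i else 0)"
      unfolding S2 using False by (intro sum.cong refl) simp
    then show ?thesis unfolding split S1 F using False by (simp add: cof_def)
  next
    case True
    have R: "Qprod n m a k (l+m) \<mu> $$ (p,u) = (\<Sum>i<m. cof \<mu> i * A i)"
      unfolding A_def by (rule phi_rec[OF p u])
    have "(\<Sum>i<m. cof \<mu> i * A i) = (\<Sum>i<m. \<mu> * (if odd i then A i else 0) + (if odd i then 0 else A i))"
      by (rule sum.cong) (auto simp: cof_def)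
    also have "\<dots> = (\<Sum>i<m. \<mu> * (if odd i then A i else 0)) + (\<Sum>i<m. if odd i then 0 else A i)"
      by (rule sum.distrib)
    also have "\<dots> = \<mu> * (\<Sum>i<m. if odd i then A i else 0) + (\<Sum>i<m. if odd i then 0 else A i)"
      by (simp only: sum_distrib_left)
    finally have R2: "(\<Sum>i<m. cof \<mu> i * A i) = \<mu> * (\<Sum>i<m. if odd i then A i else 0) + (\<Sum>i<m. if odd i then 0 else A i)" .
    have "?S2 = (\<Sum>i<m. - (if odd i then 0 else A i))"
      unfolding S2 using True by (intro sum.cong refl) simp
    also have "\<dots> = - (\<Sum>i<m. if odd i then 0 else A i)" by (rule sum_negf)
    finally have S2': "?S2 = - (\<Sum>i<m. if odd i then 0 else A i)" .
    show ?thesis unfolding split S1 F S2' using True R R2 by (simp add: cof_def)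
  qed
qed

definition Wm where "Wm k \<mu> = mat (m*n) (m*n) (\<lambda>(p,r). Qprod n m a k (2*(r div n)+1) \<mu> $$ (p, r mod n))"
definition TT where "TT k = mat (m*n) (m*n) (\<lambda>(r,q). tt k (q div n) (r div n) (r mod n) (q mod n))"
definition Tm where "Tm k = mat (m*n) n (\<lambda>(r,u). tt k m (r div n) (r mod n) u)"
definition Nm where "Nm k \<mu> = mat (m*n) (m*n) (\<lambda>(p,q). Fm k (q div n) \<mu> $$ (p, q mod n))"
definition Nc where "Nc k \<mu> = mat (m*n) (m*n) (\<lambda>(p,q). cof \<mu> (q div n) * Fm k (q div n) \<mu> $$ (p, q mod n))"

lemma Wm_carrier[simp]: "Wm k \<mu> \<in> carrier_mat (m*n) (m*n)" by (simp add: Wm_def)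
lemma TT_carrier[simp]: "TT k \<in> carrier_mat (m*n) (m*n)" by (simp add: TT_def)
lemma Tm_carrier[simp]: "Tm k \<in> carrier_mat (m*n) n" by (simp add: Tm_def)
lemma Nm_carrier[simp]: "Nm k \<mu> \<in> carrier_mat (m*n) (m*n)" by (simp add: Nm_def)
lemma Nc_carrier[simp]: "Nc k \<mu> \<in> carrier_mat (m*n) (m*n)" by (simp add: Nc_def)

lemma WTT: "Wm k \<mu> * TT k = Nc k \<mu>"
proof (rule eq_matI)
  fix p q assume p: "p < dim_row (Nc k \<mu>)" and q: "q < dim_col (Nc k \<mu>)"
  then have p': "p < m*n" and q': "q < m*n" by (auto simp: Nc_def)
  have l: "q div n < m" "q div n \<le> m" using div_lt[OF q'] by auto
  have u: "q mod n < n" using mod_lt[OF q'] .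
  have "(Wm k \<mu> * TT k) $$ (p,q) = (\<Sum>r<m*n. Wm k \<mu> $$ (p,r) * TT k $$ (r,q))"
    by (rule mult_entry[OF Wm_carrier TT_carrier p' q'])
  also have "\<dots> = (\<Sum>c<m. \<Sum>w<n. Wm k \<mu> $$ (p,c*n+w) * TT k $$ (c*n+w,q))"
    by (rule sum_blocks)
  also have "\<dots> = (\<Sum>c<m. \<Sum>w<n. Qprod n m a k (2*c+1) \<mu> $$ (p,w) * tt k (q div n) c w (q mod n))"
  proof (intro sum.cong refl)
    fix c w assume "c \<in> {..<m}" "w \<in> {..<n}"
    then have lt: "c*n+w < m*n" "w < n" using blk_lt[of c m w n] by auto
    show "Wm k \<mu> $$ (p,c*n+w) * TT k $$ (c*n+w,q) = Qprod n m a k (2*c+1) \<mu> $$ (p,w) * tt k (q div n) c w (q mod n)"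
      using lt p' q' by (simp add: Wm_def TT_def)
  qed
  also have "\<dots> = cof \<mu> (q div n) * Fm k (q div n) \<mu> $$ (p, q mod n)"
    by (rule WT[OF l(2) p' u])
  also have "\<dots> = Nc k \<mu> $$ (p,q)" using p' q' by (simp add: Nc_def)
  finally show "(Wm k \<mu> * TT k) $$ (p,q) = Nc k \<mu> $$ (p,q)" .
qed (auto simp: Wm_def Nc_def TT_def)

end

context PM begin
lemma dim_Fm[simp]: "dim_row (Fm k l \<mu>) = m*n" "dim_col (Fm k l \<mu>) = n"
  by (rule carrier_matD[OF Fm_carrier])+

lemma Wm_idx: "p < m*n \<Longrightarrow> (c::nat) < m \<Longrightarrow> w < n \<Longrightarrow> Wm k \<mu> $$ (p,c*n+w) = Qprod n m a k (2*c+1) \<mu> $$ (p,w)"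
  using blk_lt[of c m w n] by (simp add: Wm_def)
lemma Tm_idx: "q < n \<Longrightarrow> (c::nat) < m \<Longrightarrow> w < n \<Longrightarrow> Tm k $$ (c*n+w,q) = tt k m c w q"
  using blk_lt[of c m w n] by (simp add: Tm_def)

lemma WTm: "Wm k \<mu> * Tm k = Fm k m \<mu>"
proof (rule eq_matI)
  fix p q assume p: "p < dim_row (Fm k m \<mu>)" and q: "q < dim_col (Fm k m \<mu>)"
  then have p': "p < m*n" and q': "q < n" by simp_all
  have "(Wm k \<mu> * Tm k) $$ (p,q) = (\<Sum>r<m*n. Wm k \<mu> $$ (p,r) * Tm k $$ (r,q))"
    by (rule mult_entry[OF Wm_carrier Tm_carrier p' q'])
  also have "\<dots> = (\<Sum>c<m. \<Sum>w<n. Wm k \<mu> $$ (p,c*n+w) * Tm k $$ (c*n+w,q))"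
    by (rule sum_blocks)
  also have "\<dots> = (\<Sum>c<m. \<Sum>w<n. Qprod n m a k (2*c+1) \<mu> $$ (p,w) * tt k m c w q)"
  proof (intro sum.cong refl)
    fix c w assume cw: "c \<in> {..<m}" "w \<in> {..<n}"
    show "Wm k \<mu> $$ (p,c*n+w) * Tm k $$ (c*n+w,q) = Qprod n m a k (2*c+1) \<mu> $$ (p,w) * tt k m c w q"
      using cw p' q' Wm_idx[of p c w k \<mu>] Tm_idx[of q c w k] by simp
  qed
  also have "\<dots> = cof \<mu> m * Fm k m \<mu> $$ (p, q)"
    by (rule WT[OF order_refl p' q'])
  also have "\<dots> = Fm k m \<mu> $$ (p,q)" using meven by (simp add: cof_def)
  finally show "(Wm k \<mu> * Tm k) $$ (p,q) = Fm k m \<mu> $$ (p,q)" .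
qed (simp_all add: Wm_def Tm_def)


end

lemma dimsQ[simp]: "dim_row (Qmat n m b k \<mu>) = m*n" "dim_col (Qmat n m b k \<mu>) = m*n"
  "dim_row (Qprod n m b k l \<mu>) = m*n" "dim_col (Qprod n m b k l \<mu>) = m*n"
  "dim_row (Lmat n m L k) = m*n" "dim_col (Lmat n m L k) = m*n"
  by (rule carrier_matD[OF Qmat_carrier] carrier_matD[OF Qprod_carrier] carrier_matD[OF Lmat_carrier])+

lemma minv_props:
  assumes A: "A \<in> carrier_mat d d" and inv: "invertible_mat A"
  shows "A * minv A = 1\<^sub>m d" "minv A * A = 1\<^sub>m d" "minv A \<in> carrier_mat d d"
proof -
  obtain B where AB: "A * B = 1\<^sub>m (dim_row A)" "B * A = 1\<^sub>m (dim_row B)"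
    using inv unfolding invertible_mat_def inverts_mat_def by blast
  have dA: "dim_row A = d" "dim_col A = d" using A by auto
  have dB: "dim_col B = d" using AB(1) dA by (metis index_mult_mat(3) index_one_mat(3))
  have "dim_col (B*A) = d" using dA by simp
  then have dB2: "dim_row B = d" using AB(2) by (metis index_one_mat(3))
  have Bc: "B \<in> carrier_mat d d" using dB dB2 by auto
  have U: "A \<in> Units (ring_mat TYPE(complex) d ())"
    unfolding Units_def using A Bc AB dA dB2 by (auto simp: ring_mat_simps)
  have "mat_inverse A \<noteq> None"
  proof
    assume N: "mat_inverse A = None"
    show False using mat_inverse(1)[OF A N, of "()"] U by simp
  qed
  then obtain C where C: "mat_inverse A = Some C" by auto
  have "A * C = 1\<^sub>m d \<and> C * A = 1\<^sub>m d \<and> C \<in> carrier_mat d d" by (rule mat_inverse(2)[OF A C])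
  moreover have "minv A = C" unfolding minv_def C by simp
  ultimately show "A * minv A = 1\<^sub>m d" "minv A * A = 1\<^sub>m d" "minv A \<in> carrier_mat d d" by auto
qed

lemma det_inv_nz:
  assumes A: "A \<in> carrier_mat d d" and inv: "invertible_mat A"
  shows "det A \<noteq> (0::complex)"
proof
  assume "det A = 0"
  moreover have "det (A * minv A) = det A * det (minv A)"
    by (rule det_mult[OF A minv_props(3)[OF A inv]])
  ultimately show False using minv_props(1)[OF A inv] by simp
qed

lemma left_inv_det:
  assumes A: "A \<in> carrier_mat d d" and dA: "det A \<noteq> (0::complex)"
  obtains B where "B \<in> carrier_mat d d" "B * A = 1\<^sub>m d"
proof -
  have "A \<in> Units (ring_mat TYPE(complex) d ())" by (rule det_non_zero_imp_unit[OF A dA])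
  then obtain B where "B \<in> carrier_mat d d" "B * A = 1\<^sub>m d"
    unfolding Units_def by (auto simp: ring_mat_simps)
  then show ?thesis using that by blast
qed

context PM begin

lemma dims[simp]:
  "dim_row (Nm k \<mu>) = m*n" "dim_col (Nm k \<mu>) = m*n"
  "dim_row (Nc k \<mu>) = m*n" "dim_col (Nc k \<mu>) = m*n"
  "dim_row (Wm k \<mu>) = m*n" "dim_col (Wm k \<mu>) = m*n"
  "dim_row (TT k) = m*n" "dim_col (TT k) = m*n"
  "dim_row (Tm k) = m*n" "dim_col (Tm k) = n"
  by (rule carrier_matD[OF Nm_carrier] carrier_matD[OF Nc_carrier] carrier_matD[OF Wm_carrier]
      carrier_matD[OF TT_carrier] carrier_matD[OF Tm_carrier])+

lemma Fm1: "Fm k l 1 = Fvec n m a k l" unfolding Fm_def Fvec_def by simp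
lemma Nm1: "Nm k 1 = Nmat n m a k" unfolding Nm_def Nmat_def Fm1 by simp
lemma Nc1: "Nc k 1 = Nm k 1" unfolding Nc_def Nm_def cof_def by simp

definition Gm where "Gm k = minv (Nmat n m a k) * Fvec n m a k m"
lemma Nmat_carrier[simp]: "Nmat n m a k \<in> carrier_mat (m*n) (m*n)" by (simp add: Nmat_def)
lemma Fvec_carrier[simp]: "Fvec n m a k l \<in> carrier_mat (m*n) n" using Fm_carrier[of k l 1] by (simp add: Fm1)

lemma Gm_carrier[simp]: assumes "invertible_mat (Nmat n m a k)" shows "Gm k \<in> carrier_mat (m*n) n"
  unfolding Gm_def using minv_props(3)[OF Nmat_carrier assms] by (rule mult_carrier_mat) simp

lemma TTG: assumes inv: "invertible_mat (Nmat n m a k)" shows "TT k * Gm k = Tm k"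
proof -
  let ?N = "Nmat n m a k" and ?F = "Fvec n m a k m" and ?W = "Wm k 1"
  have N: "?N = ?W * TT k" using WTT[of k 1] Nc1 Nm1 by simp
  have F: "?F = ?W * Tm k" using WTm[of k 1] Fm1 by simp
  have Mc: "minv ?N \<in> carrier_mat (m*n) (m*n)" by (rule minv_props(3)[OF Nmat_carrier inv])
  have NG: "?N * Gm k = ?F"
  proof -
    have "?N * Gm k = (?N * minv ?N) * ?F" unfolding Gm_def
      by (rule assoc_mult_mat[symmetric, OF Nmat_carrier Mc Fvec_carrier])
    also have "\<dots> = ?F" using minv_props(1)[OF Nmat_carrier inv] left_mult_one_mat[OF Fvec_carrier] by simp
    finally show ?thesis .
  qed
  have "det ?N \<noteq> 0" by (rule det_inv_nz[OF Nmat_carrier inv])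
  then have "det ?W * det (TT k) \<noteq> 0" unfolding N using det_mult[OF Wm_carrier TT_carrier] by simp
  then have "det ?W \<noteq> 0" by auto
  then obtain B where B: "B \<in> carrier_mat (m*n) (m*n)" "B * ?W = 1\<^sub>m (m*n)"
    using left_inv_det[OF Wm_carrier] by blast
  have G: "Gm k \<in> carrier_mat (m*n) n" using inv by simp
  have TG: "TT k * Gm k \<in> carrier_mat (m*n) n" by (rule mult_carrier_mat[OF TT_carrier G])
  have "TT k * Gm k = (B * ?W) * (TT k * Gm k)" using B(2) left_mult_one_mat[OF TG] by simp
  also have "\<dots> = B * (?W * (TT k * Gm k))" by (rule assoc_mult_mat[OF B(1) Wm_carrier TG])
  also have "?W * (TT k * Gm k) = (?W * TT k) * Gm k" by (rule assoc_mult_mat[OF Wm_carrier TT_carrier G, symmetric])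
  also have "\<dots> = ?F" using N NG by simp
  also have "?F = ?W * Tm k" by (rule F)
  also have "B * (?W * Tm k) = (B * ?W) * Tm k" by (rule assoc_mult_mat[OF B(1) Wm_carrier Tm_carrier, symmetric])
  also have "\<dots> = Tm k" using B(2) left_mult_one_mat[OF Tm_carrier] by simp
  finally show ?thesis .
qed

definition Xm where "Xm k \<mu> = mat (m*n) n (\<lambda>(p,u). cof \<mu> (p div n) * Gm k $$ (p,u))"
lemma Xm_carrier[simp]: "Xm k \<mu> \<in> carrier_mat (m*n) n" by (simp add: Xm_def)
lemma dimX[simp]: "dim_row (Xm k \<mu>) = m*n" "dim_col (Xm k \<mu>) = n"  by (simp_all add: Xm_def)

lemma Nm_idx: "p < m*n \<Longrightarrow> q < m*n \<Longrightarrow> Nm k \<mu> $$ (p,q) = Fm k (q div n) \<mu> $$ (p, q mod n)"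
  by (simp add: Nm_def)
lemma Nc_idx: "p < m*n \<Longrightarrow> q < m*n \<Longrightarrow> Nc k \<mu> $$ (p,q) = cof \<mu> (q div n) * Fm k (q div n) \<mu> $$ (p, q mod n)"
  by (simp add: Nc_def)
lemma Xm_idx: "p < m*n \<Longrightarrow> u < n \<Longrightarrow> Xm k \<mu> $$ (p,u) = cof \<mu> (p div n) * Gm k $$ (p,u)"
  by (simp add: Xm_def)

lemma NX: assumes inv: "invertible_mat (Nmat n m a k)" shows "Nm k \<mu> * Xm k \<mu> = Fm k m \<mu>"
proof -
  have G: "Gm k \<in> carrier_mat (m*n) n" using inv by simp
  have "Nm k \<mu> * Xm k \<mu> = Nc k \<mu> * Gm k"
  proof (rule eq_matI)
    fix p u assume pu: "p < dim_row (Nc k \<mu> * Gm k)" "u < dim_col (Nc k \<mu> * Gm k)"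
    then have p: "p < m*n" and u: "u < n" using G by auto
    have "(Nm k \<mu> * Xm k \<mu>) $$ (p,u) = (\<Sum>r<m*n. Nm k \<mu> $$ (p,r) * Xm k \<mu> $$ (r,u))"
      by (rule mult_entry[OF Nm_carrier Xm_carrier p u])
    also have "\<dots> = (\<Sum>r<m*n. Nc k \<mu> $$ (p,r) * Gm k $$ (r,u))"
    proof (rule sum.cong[OF refl])
      fix r assume "r \<in> {..<m*n}"
      then have r: "r < m*n" by simp
      show "Nm k \<mu> $$ (p,r) * Xm k \<mu> $$ (r,u) = Nc k \<mu> $$ (p,r) * Gm k $$ (r,u)"
        unfolding Nm_idx[OF p r] Nc_idx[OF p r] Xm_idx[OF r u] by simp
    qed
    also have "\<dots> = (Nc k \<mu> * Gm k) $$ (p,u)"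
      by (rule mult_entry[OF Nc_carrier G p u, symmetric])
    finally show "(Nm k \<mu> * Xm k \<mu>) $$ (p,u) = (Nc k \<mu> * Gm k) $$ (p,u)" .
  next
    show "dim_row (Nm k \<mu> * Xm k \<mu>) = dim_row (Nc k \<mu> * Gm k)" by simp
    show "dim_col (Nm k \<mu> * Xm k \<mu>) = dim_col (Nc k \<mu> * Gm k)" using G by simp
  qed
  also have "\<dots> = (Wm k \<mu> * TT k) * Gm k" using WTT by simp
  also have "\<dots> = Wm k \<mu> * (TT k * Gm k)" by (rule assoc_mult_mat[OF Wm_carrier TT_carrier G])
  also have "\<dots> = Fm k m \<mu>" using TTG[OF inv] WTm by simp
  finally show ?thesis .
qed

definition Comp where
  "Comp X = mat (m*n) (m*n) (\<lambda>(p,q). if q div n = m-1 then X $$ (p, q mod n)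
      else if p div n = q div n + 1 \<and> p mod n = q mod n then 1 else 0)"
lemma Comp_carrier[simp]: "Comp X \<in> carrier_mat (m*n) (m*n)" by (simp add: Comp_def)
lemma dimC[simp]: "dim_row (Comp X) = m*n" "dim_col (Comp X) = m*n"  by (simp_all add: Comp_def)

lemma QF: "Qmat n m a k \<mu> * Fm (Suc k) l \<mu> = Fm k (Suc l) \<mu>"
proof -
  have "Qmat n m a k \<mu> * Fm (Suc k) l \<mu> = (Qmat n m a k \<mu> * Qprod n m a (Suc k) l \<mu>) * rvec n m a (Suc k + l)"
    unfolding Fm_def by (rule assoc_mult_mat[symmetric, OF Qmat_carrier Qprod_carrier rvec_carrier])
  also have "\<dots> = Fm k (Suc l) \<mu>" unfolding Fm_def Qprod_shift[symmetric] by simp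
  finally show ?thesis .
qed

lemma L1:
  assumes X: "X \<in> carrier_mat (m*n) n" and NX: "Nm k \<mu> * X = Fm k m \<mu>"
  shows "Qmat n m a k \<mu> * Nm (Suc k) \<mu> = Nm k \<mu> * Comp X"
proof (rule eq_matI)
  fix p q assume "p < dim_row (Nm k \<mu> * Comp X)" "q < dim_col (Nm k \<mu> * Comp X)"
  then have p: "p < m*n" and q: "q < m*n" by auto
  define l where "l = q div n"
  define u where "u = q mod n"
  have l: "l < m" and u: "u < n" using div_lt[OF q] mod_lt[OF q] unfolding l_def u_def by auto
  have qlu: "q = l*n+u" unfolding l_def u_def by simp
  have "(Qmat n m a k \<mu> * Nm (Suc k) \<mu>) $$ (p,q) = (\<Sum>r<m*n. Qmat n m a k \<mu> $$ (p,r) * Nm (Suc k) \<mu> $$ (r,q))"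
    by (rule mult_entry[OF Qmat_carrier Nm_carrier p q])
  also have "\<dots> = (\<Sum>r<m*n. Qmat n m a k \<mu> $$ (p,r) * Fm (Suc k) l \<mu> $$ (r,u))"
    by (rule sum.cong[OF refl]) (simp add: Nm_idx q l_def u_def)
  also have "\<dots> = (Qmat n m a k \<mu> * Fm (Suc k) l \<mu>) $$ (p,u)"
    by (rule mult_entry[OF Qmat_carrier Fm_carrier p u, symmetric])
  also have "\<dots> = Fm k (Suc l) \<mu> $$ (p,u)" unfolding QF ..
  also have "\<dots> = (Nm k \<mu> * Comp X) $$ (p,q)"
  proof (cases "l = m-1")
    case True
    have "(Nm k \<mu> * Comp X) $$ (p,q) = (\<Sum>r<m*n. Nm k \<mu> $$ (p,r) * Comp X $$ (r,q))"
      by (rule mult_entry[OF Nm_carrier Comp_carrier p q])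
    also have "\<dots> = (\<Sum>r<m*n. Nm k \<mu> $$ (p,r) * X $$ (r,u))"
      by (rule sum.cong[OF refl]) (use True q in \<open>simp add: Comp_def l_def u_def\<close>)
    also have "\<dots> = (Nm k \<mu> * X) $$ (p,u)" by (rule mult_entry[OF Nm_carrier X p u, symmetric])
    also have "\<dots> = Fm k (Suc l) \<mu> $$ (p,u)" unfolding NX using True m2 by simp
    finally show ?thesis by simp
  next
    case False
    then have l1: "Suc l < m" using l by linarith
    have lt: "Suc l * n + u < m*n" by (rule blk_lt[OF l1 u])
    have d: "(Suc l * n + u) div n = Suc l" "(Suc l*n+u) mod n = u" using u by (rule blk_div, rule blk_mod)
    have "(Nm k \<mu> * Comp X) $$ (p,q) = (\<Sum>r<m*n. Nm k \<mu> $$ (p,r) * Comp X $$ (r,q))"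
      by (rule mult_entry[OF Nm_carrier Comp_carrier p q])
    also have "\<dots> = (\<Sum>r<m*n. if r = Suc l * n + u then Nm k \<mu> $$ (p,r) else 0)"
    proof (rule sum.cong[OF refl])
      fix r assume "r \<in> {..<m*n}"
      then have r: "r < m*n" by simp
      have "Comp X $$ (r,q) = (if r div n = Suc l \<and> r mod n = u then 1 else 0)"
        using False r q unfolding Comp_def l_def u_def by simp
      also have "\<dots> = (if r = Suc l * n + u then 1 else 0)" using divmod_iff[OF u, of r "Suc l"] by simp
      finally show "Nm k \<mu> $$ (p,r) * Comp X $$ (r,q) = (if r = Suc l * n + u then Nm k \<mu> $$ (p,r) else 0)"
        by simp
    qed
    also have "\<dots> = Nm k \<mu> $$ (p, Suc l * n + u)" using lt by simp
    also have "\<dots> = Fm k (Suc l) \<mu> $$ (p,u)" using Nm_idx[OF p lt, unfolded d] by simp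
    finally show ?thesis by simp
  qed
  finally show "(Qmat n m a k \<mu> * Nm (Suc k) \<mu>) $$ (p,q) = (Nm k \<mu> * Comp X) $$ (p,q)" .
qed auto

end

lemma Lmat_idx: "p < m*n \<Longrightarrow> q < m*n \<Longrightarrow> Lmat n m L k $$ (p,q)
   = (if p div n = q div n then L (k + p div n) $$ (p mod n, q mod n) else 0)"
  by (simp add: Lmat_def)

lemma Lmat_left:
  assumes X: "X \<in> carrier_mat (m*n) e" and p: "p < m*n" and q: "q < e"
  shows "(Lmat n m L k * X) $$ (p,q) = (\<Sum>t<n. L (k + p div n) $$ (p mod n, t) * X $$ ((p div n)*n + t, q))"
proof -
  have i: "p div n < m" using div_lt[OF p] .
  have "(Lmat n m L k * X) $$ (p,q) = (\<Sum>r<m*n. Lmat n m L k $$ (p,r) * X $$ (r,q))"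
    by (rule mult_entry[OF Lmat_carrier X p q])
  also have "\<dots> = (\<Sum>j<m. \<Sum>w<n. Lmat n m L k $$ (p,j*n+w) * X $$ (j*n+w,q))" by (rule sum_blocks)
  also have "\<dots> = (\<Sum>j<m. if j = p div n then (\<Sum>w<n. L (k + p div n) $$ (p mod n, w) * X $$ (j*n+w, q)) else 0)"
  proof (rule sum.cong[OF refl])
    fix j assume j: "j \<in> {..<m}"
    have "(\<Sum>w<n. Lmat n m L k $$ (p,j*n+w) * X $$ (j*n+w,q))
        = (\<Sum>w<n. if j = p div n then L (k + p div n) $$ (p mod n, w) * X $$ (j*n+w, q) else 0)"
    proof (rule sum.cong[OF refl])
      fix w assume w: "w \<in> {..<n}"
      then have lt: "j*n+w < m*n" using j blk_lt[of j m w n] by auto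
      show "Lmat n m L k $$ (p,j*n+w) * X $$ (j*n+w,q)
          = (if j = p div n then L (k + p div n) $$ (p mod n, w) * X $$ (j*n+w, q) else 0)"
        using w unfolding Lmat_idx[OF p lt] by auto
    qed
    then show "(\<Sum>w<n. Lmat n m L k $$ (p,j*n+w) * X $$ (j*n+w,q))
        = (if j = p div n then (\<Sum>w<n. L (k + p div n) $$ (p mod n, w) * X $$ (j*n+w, q)) else 0)"
      by simp
  qed
  also have "\<dots> = (\<Sum>t<n. L (k + p div n) $$ (p mod n, t) * X $$ ((p div n)*n + t, q))"
    using i by simp
  finally show ?thesis .
qed

lemma Lmat_right:
  assumes X: "X \<in> carrier_mat e (m*n)" and p: "p < e" and q: "q < m*n"
  shows "(X * Lmat n m L k) $$ (p,q) = (\<Sum>t<n. X $$ (p, (q div n)*n + t) * L (k + q div n) $$ (t, q mod n))"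
proof -
  have i: "q div n < m" using div_lt[OF q] .
  have "(X * Lmat n m L k) $$ (p,q) = (\<Sum>r<m*n. X $$ (p,r) * Lmat n m L k $$ (r,q))"
    by (rule mult_entry[OF X Lmat_carrier p q])
  also have "\<dots> = (\<Sum>j<m. \<Sum>w<n. X $$ (p,j*n+w) * Lmat n m L k $$ (j*n+w,q))" by (rule sum_blocks)
  also have "\<dots> = (\<Sum>j<m. if j = q div n then (\<Sum>w<n. X $$ (p, j*n+w) * L (k + q div n) $$ (w, q mod n)) else 0)"
  proof (rule sum.cong[OF refl])
    fix j assume j: "j \<in> {..<m}"
    have "(\<Sum>w<n. X $$ (p,j*n+w) * Lmat n m L k $$ (j*n+w,q))
        = (\<Sum>w<n. if j = q div n then X $$ (p, j*n+w) * L (k + q div n) $$ (w, q mod n) else 0)"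
    proof (rule sum.cong[OF refl])
      fix w assume w: "w \<in> {..<n}"
      then have lt: "j*n+w < m*n" using j blk_lt[of j m w n] by auto
      show "X $$ (p,j*n+w) * Lmat n m L k $$ (j*n+w,q)
          = (if j = q div n then X $$ (p, j*n+w) * L (k + q div n) $$ (w, q mod n) else 0)"
        using w unfolding Lmat_idx[OF lt q] by auto
    qed
    then show "(\<Sum>w<n. X $$ (p,j*n+w) * Lmat n m L k $$ (j*n+w,q))
        = (if j = q div n then (\<Sum>w<n. X $$ (p, j*n+w) * L (k + q div n) $$ (w, q mod n)) else 0)"
      by simp
  qed
  also have "\<dots> = (\<Sum>t<n. X $$ (p, (q div n)*n + t) * L (k + q div n) $$ (t, q mod n))"
    using i by simp
  finally show ?thesis .
qed

lemma Lmat_mult: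
  assumes L: "\<And>j. L j \<in> carrier_mat n n" and L': "\<And>j. L' j \<in> carrier_mat n n"
  shows "Lmat n m L k * Lmat n m L' k = Lmat n m (\<lambda>j. L j * L' j) k"
proof (rule eq_matI)
  fix p q assume "p < dim_row (Lmat n m (\<lambda>j. L j * L' j) k)" "q < dim_col (Lmat n m (\<lambda>j. L j * L' j) k)"
  then have p: "p < m*n" and q: "q < m*n" by auto
  have pm: "p mod n < n" and qm: "q mod n < n" using mod_lt[OF p] mod_lt[OF q] by auto
  have "(Lmat n m L k * Lmat n m L' k) $$ (p,q)
      = (\<Sum>t<n. L (k + p div n) $$ (p mod n, t) * Lmat n m L' k $$ ((p div n)*n + t, q))"
    by (rule Lmat_left[OF Lmat_carrier p q])
  also have "\<dots> = (\<Sum>t<n. if p div n = q div n then L (k + p div n) $$ (p mod n, t) * L' (k + p div n) $$ (t, q mod n) else 0)"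
  proof (rule sum.cong[OF refl])
    fix t assume t: "t \<in> {..<n}"
    then have lt: "(p div n)*n + t < m*n" using blk_lt[OF div_lt[OF p], of t] by auto
    show "L (k + p div n) $$ (p mod n, t) * Lmat n m L' k $$ ((p div n)*n + t, q)
        = (if p div n = q div n then L (k + p div n) $$ (p mod n, t) * L' (k + p div n) $$ (t, q mod n) else 0)"
      using t unfolding Lmat_idx[OF lt q] by auto
  qed
  also have "\<dots> = (if p div n = q div n then (L (k + p div n) * L' (k + p div n)) $$ (p mod n, q mod n) else 0)"
    using mult_entry[OF L L' pm qm] by simp
  also have "\<dots> = Lmat n m (\<lambda>j. L j * L' j) k $$ (p,q)" unfolding Lmat_idx[OF p q] by simp
  finally show "(Lmat n m L k * Lmat n m L' k) $$ (p,q) = Lmat n m (\<lambda>j. L j * L' j) k $$ (p,q)" .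
qed auto

lemma Lmat_one: "Lmat n m (\<lambda>j. 1\<^sub>m n) k = 1\<^sub>m (m*n)"
proof (rule eq_matI)
  fix p q assume "p < dim_row (1\<^sub>m (m*n))" "q < dim_col (1\<^sub>m (m*n) :: complex mat)"
  then have p: "p < m*n" and q: "q < m*n" by auto
  have pm: "p mod n < n" and qm: "q mod n < n" using mod_lt[OF p] mod_lt[OF q] by auto
  have "(p = q) = (p div n = q div n \<and> p mod n = q mod n)" by (metis div_mult_mod_eq)
  then show "Lmat n m (\<lambda>j. 1\<^sub>m n) k $$ (p,q) = (1\<^sub>m (m*n) :: complex mat) $$ (p,q)"
    unfolding Lmat_idx[OF p q] using p q pm qm by auto
qed auto

lemma Lmat_invertible:
  assumes L: "\<And>j. L j \<in> carrier_mat n n" and Li: "\<And>j. invertible_mat (L j)"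
  shows "Lmat n m L k * Lmat n m (\<lambda>j. minv (L j)) k = 1\<^sub>m (m*n)"
    "Lmat n m (\<lambda>j. minv (L j)) k * Lmat n m L k = 1\<^sub>m (m*n)"
    "invertible_mat (Lmat n m L k)"
proof -
  have M: "\<And>j. minv (L j) \<in> carrier_mat n n" using minv_props(3)[OF L Li] .
  show 1: "Lmat n m L k * Lmat n m (\<lambda>j. minv (L j)) k = 1\<^sub>m (m*n)"
    unfolding Lmat_mult[OF L M] minv_props(1)[OF L Li] Lmat_one ..
  show 2: "Lmat n m (\<lambda>j. minv (L j)) k * Lmat n m L k = 1\<^sub>m (m*n)"
    unfolding Lmat_mult[OF M L] minv_props(2)[OF L Li] Lmat_one ..
  show "invertible_mat (Lmat n m L k)"
    unfolding invertible_mat_def inverts_mat_def square_mat.simps using 1 2 by auto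
qed


context PM begin

lemma Comp_idx: "p < m*n \<Longrightarrow> q < m*n \<Longrightarrow> Comp X $$ (p,q) = (if q div n = m-1 then X $$ (p, q mod n)
      else if p div n = q div n + 1 \<and> p mod n = q mod n then 1 else 0)"
  by (simp add: Comp_def)

definition Mk where
  "Mk lam k = minv (Lmat n m (lam a) k) * minv (Nmat n m a k) * Qmat n m a k 1
     * Nmat n m a (Suc k) * Lmat n m (lam a) (Suc k)"

lemma QT_idx:
  assumes r: "r < m*n" and q: "q < m*n"
  shows "Qmat n m (Tmap n m lam a) k \<mu> $$ (r,q) = (if q div n = m-1 then cof \<mu> (r div n) * Mk lam k $$ (r, q)
     else if r div n = q div n + 1 \<and> r mod n = q mod n then 1 else 0)"
proof -
  have rm: "r mod n < n" and qm: "q mod n < n" using mod_lt[OF r] mod_lt[OF q] by auto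
  have T: "Tmap n m lam a k i $$ (x,y) = Mk lam k $$ (i*n+x, (m-1)*n+y)" if "x < n" "y < n" for i x y
    using that by (simp add: Tmap_def Mk_def Let_def)
  have e1: "r div n * n + r mod n = r" by (rule div_mult_mod_eq)
  have e2: "q div n * n + q mod n = q" by (rule div_mult_mod_eq)
  have "Qmat n m (Tmap n m lam a) k \<mu> $$ (r,q) = (if q div n = m - 1 then (if odd (r div n) then \<mu> else 1) * Tmap n m lam a k (r div n) $$ (r mod n, q mod n)
      else if r div n = q div n + 1 \<and> r mod n = q mod n then 1 else 0)"
    using r q by (simp add: Qmat_def)
  moreover have "(m-1)*n + q mod n = q" if "q div n = m-1" using e2 that by simp
  ultimately show ?thesis using T[OF rm qm, of "r div n", unfolded e1] by (auto simp: cof_def)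
qed

lemma Mk_prop:
  assumes invN: "\<And>k. invertible_mat (Nmat n m a k)"
    and Lc: "\<And>j. lam a j \<in> carrier_mat n n" and Li: "\<And>j. invertible_mat (lam a j)"
  shows "Lmat n m (lam a) k * Mk lam k = Comp (Xm k 1) * Lmat n m (lam a) (Suc k)"
proof -
  let ?L = "Lmat n m (lam a) k" and ?L' = "Lmat n m (lam a) (Suc k)"
  let ?N = "Nmat n m a k" and ?N' = "Nmat n m a (Suc k)" and ?Q = "Qmat n m a k 1"
  let ?C = "Comp (Xm k 1)"
  have LI: "invertible_mat ?L" by (rule Lmat_invertible(3)[OF Lc Li])
  have mL: "minv ?L \<in> carrier_mat (m*n) (m*n)" by (rule minv_props(3)[OF Lmat_carrier LI])
  have mN: "minv ?N \<in> carrier_mat (m*n) (m*n)" by (rule minv_props(3)[OF Nmat_carrier invN])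
  have QN: "?Q * ?N' = ?N * ?C"
    using L1[OF Xm_carrier NX[OF invN, of k 1]] by (simp add: Nm1)
  have core: "(minv ?N * ?Q) * ?N' = ?C"
  proof -
    have "(minv ?N * ?Q) * ?N' = minv ?N * (?Q * ?N')" by (rule assoc_mult_mat[OF mN Qmat_carrier Nmat_carrier])
    also have "\<dots> = minv ?N * (?N * ?C)" unfolding QN ..
    also have "\<dots> = (minv ?N * ?N) * ?C" by (rule assoc_mult_mat[OF mN Nmat_carrier Comp_carrier, symmetric])
    also have "\<dots> = ?C" using minv_props(2)[OF Nmat_carrier invN] left_mult_one_mat[OF Comp_carrier] by simp
    finally show ?thesis .
  qed
  have "Mk lam k = (((minv ?L * minv ?N) * ?Q) * ?N') * ?L'" unfolding Mk_def ..
  also have "((minv ?L * minv ?N) * ?Q) = minv ?L * (minv ?N * ?Q)" by (rule assoc_mult_mat[OF mL mN Qmat_carrier])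
  also have "(minv ?L * (minv ?N * ?Q)) * ?N' = minv ?L * ((minv ?N * ?Q) * ?N')"
    by (rule assoc_mult_mat[OF mL mult_carrier_mat[OF mN Qmat_carrier] Nmat_carrier])
  also have "\<dots> = minv ?L * ?C" unfolding core ..
  finally have Mk: "Mk lam k = (minv ?L * ?C) * ?L'" .
  have "?L * Mk lam k = ?L * (minv ?L * (?C * ?L'))" unfolding Mk by (simp add: assoc_mult_mat[OF mL Comp_carrier Lmat_carrier])
  also have "\<dots> = (?L * minv ?L) * (?C * ?L')" by (rule assoc_mult_mat[OF Lmat_carrier mL mult_carrier_mat[OF Comp_carrier Lmat_carrier], symmetric])
  also have "\<dots> = ?C * ?L'" using minv_props(1)[OF Lmat_carrier LI] left_mult_one_mat[OF mult_carrier_mat[OF Comp_carrier Lmat_carrier]] by simp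
  finally show ?thesis .
qed

lemma Mk_carrier:
  assumes invN: "\<And>k. invertible_mat (Nmat n m a k)"
    and Lc: "\<And>j. lam a j \<in> carrier_mat n n" and Li: "\<And>j. invertible_mat (lam a j)"
  shows "Mk lam k \<in> carrier_mat (m*n) (m*n)"
proof -
  have LI: "invertible_mat (Lmat n m (lam a) k)" by (rule Lmat_invertible(3)[OF Lc Li])
  have mL: "minv (Lmat n m (lam a) k) \<in> carrier_mat (m*n) (m*n)" by (rule minv_props(3)[OF Lmat_carrier LI])
  have mN: "minv (Nmat n m a k) \<in> carrier_mat (m*n) (m*n)" by (rule minv_props(3)[OF Nmat_carrier invN])
  show ?thesis unfolding Mk_def
    by (rule mult_carrier_mat[OF mult_carrier_mat[OF mult_carrier_mat[OF mult_carrier_mat[OF mL mN] Qmat_carrier] Nmat_carrier] Lmat_carrier])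
qed

lemma LQT:
  assumes invN: "\<And>k. invertible_mat (Nmat n m a k)"
    and Lc: "\<And>j. lam a j \<in> carrier_mat n n" and Li: "\<And>j. invertible_mat (lam a j)"
  shows "Lmat n m (lam a) k * Qmat n m (Tmap n m lam a) k \<mu> = Comp (Xm k \<mu>) * Lmat n m (lam a) (Suc k)"
proof (rule eq_matI)
  fix p q assume "p < dim_row (Comp (Xm k \<mu>) * Lmat n m (lam a) (Suc k))" "q < dim_col (Comp (Xm k \<mu>) * Lmat n m (lam a) (Suc k))"
  then have p: "p < m*n" and q: "q < m*n" by auto
  define i where "i = p div n"
  define j where "j = q div n"
  define pm where "pm = p mod n"
  define qm where "qm = q mod n"
  have i: "i < m" and j: "j < m" using div_lt[OF p] div_lt[OF q] unfolding i_def j_def by auto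
  have pm: "pm < n" and qm: "qm < n" using mod_lt[OF p] mod_lt[OF q] unfolding pm_def qm_def by auto
  have pe: "p = i*n+pm" and qe: "q = j*n+qm" unfolding i_def pm_def j_def qm_def by simp_all
  have MkC: "Mk lam k \<in> carrier_mat (m*n) (m*n)" by (rule Mk_carrier[where lam=lam and k=k, OF invN Lc Li])
  have G: "Gm k \<in> carrier_mat (m*n) n" using invN by simp
  have LHS: "(Lmat n m (lam a) k * Qmat n m (Tmap n m lam a) k \<mu>) $$ (p,q)
      = (\<Sum>t<n. lam a (k + i) $$ (pm, t) * Qmat n m (Tmap n m lam a) k \<mu> $$ (i*n + t, q))"
    unfolding i_def pm_def by (rule Lmat_left[OF Qmat_carrier p q])
  have RHS: "(Comp (Xm k \<mu>) * Lmat n m (lam a) (Suc k)) $$ (p,q)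
      = (\<Sum>t<n. Comp (Xm k \<mu>) $$ (p, j*n + t) * lam a (Suc k + j) $$ (t, qm))"
    unfolding j_def qm_def by (rule Lmat_right[OF Comp_carrier p q])
  show "(Lmat n m (lam a) k * Qmat n m (Tmap n m lam a) k \<mu>) $$ (p,q) = (Comp (Xm k \<mu>) * Lmat n m (lam a) (Suc k)) $$ (p,q)"
  proof (cases "j = m-1")
    case True
    have "(\<Sum>t<n. lam a (k + i) $$ (pm, t) * Qmat n m (Tmap n m lam a) k \<mu> $$ (i*n + t, q))
        = (\<Sum>t<n. cof \<mu> i * (lam a (k + i) $$ (pm, t) * Mk lam k $$ (i*n + t, q)))"
    proof (rule sum.cong[OF refl])
      fix t assume "t \<in> {..<n}"
      then have t: "t < n" by simp
      have lt: "i*n+t < m*n" by (rule blk_lt[OF i t])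
      show "lam a (k + i) $$ (pm, t) * Qmat n m (Tmap n m lam a) k \<mu> $$ (i*n + t, q)
          = cof \<mu> i * (lam a (k + i) $$ (pm, t) * Mk lam k $$ (i*n + t, q))"
        unfolding QT_idx[OF lt q] using True t unfolding j_def by simp
    qed
    also have "\<dots> = cof \<mu> i * (Lmat n m (lam a) k * Mk lam k) $$ (p,q)"
      unfolding Lmat_left[OF MkC p q] i_def pm_def by (simp add: sum_distrib_left)
    also have "\<dots> = cof \<mu> i * (Comp (Xm k 1) * Lmat n m (lam a) (Suc k)) $$ (p,q)"
      unfolding Mk_prop[where lam=lam and k=k, OF invN Lc Li] ..
    also have "\<dots> = cof \<mu> i * (\<Sum>t<n. Comp (Xm k 1) $$ (p, j*n + t) * lam a (Suc k + j) $$ (t, qm))"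
      unfolding Lmat_right[OF Comp_carrier p q] j_def qm_def ..
    also have "\<dots> = (\<Sum>t<n. Comp (Xm k \<mu>) $$ (p, j*n + t) * lam a (Suc k + j) $$ (t, qm))"
    proof -
      have "(\<Sum>t<n. Comp (Xm k 1) $$ (p, j*n + t) * lam a (Suc k + j) $$ (t, qm))
          = (\<Sum>t<n. Gm k $$ (p,t) * lam a (Suc k + j) $$ (t, qm))"
      proof (rule sum.cong[OF refl])
        fix t assume "t \<in> {..<n}"
        then have t: "t < n" by simp
        have lt: "j*n+t < m*n" by (rule blk_lt[OF j t])
        show "Comp (Xm k 1) $$ (p, j*n + t) * lam a (Suc k + j) $$ (t, qm) = Gm k $$ (p,t) * lam a (Suc k + j) $$ (t, qm)"
          unfolding Comp_idx[OF p lt] using True t p by (simp add: Xm_idx cof_def)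
      qed
      moreover have "(\<Sum>t<n. Comp (Xm k \<mu>) $$ (p, j*n + t) * lam a (Suc k + j) $$ (t, qm))
          = (\<Sum>t<n. cof \<mu> i * (Gm k $$ (p,t) * lam a (Suc k + j) $$ (t, qm)))"
      proof (rule sum.cong[OF refl])
        fix t assume "t \<in> {..<n}"
        then have t: "t < n" by simp
        have lt: "j*n+t < m*n" by (rule blk_lt[OF j t])
        show "Comp (Xm k \<mu>) $$ (p, j*n + t) * lam a (Suc k + j) $$ (t, qm) = cof \<mu> i * (Gm k $$ (p,t) * lam a (Suc k + j) $$ (t, qm))"
          unfolding Comp_idx[OF p lt] using True t p by (simp add: Xm_idx i_def)
      qed
      ultimately show ?thesis by (simp add: sum_distrib_left)
    qed
    finally show ?thesis unfolding LHS RHS .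
  next
    case False
    have "(\<Sum>t<n. lam a (k + i) $$ (pm, t) * Qmat n m (Tmap n m lam a) k \<mu> $$ (i*n + t, q))
        = (\<Sum>t<n. if t = qm then (if i = j+1 then lam a (k + i) $$ (pm, t) else 0) else 0)"
    proof (rule sum.cong[OF refl])
      fix t assume "t \<in> {..<n}"
      then have t: "t < n" by simp
      have lt: "i*n+t < m*n" by (rule blk_lt[OF i t])
      show "lam a (k + i) $$ (pm, t) * Qmat n m (Tmap n m lam a) k \<mu> $$ (i*n + t, q)
          = (if t = qm then (if i = j+1 then lam a (k + i) $$ (pm, t) else 0) else 0)"
        unfolding QT_idx[OF lt q] using False t unfolding j_def qm_def by auto
    qed
    also have "\<dots> = (if i = j+1 then lam a (k + i) $$ (pm, qm) else 0)" using qm by simp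
    also have "\<dots> = (\<Sum>t<n. if t = pm then (if i = j+1 then lam a (Suc k + j) $$ (t, qm) else 0) else 0)"
      using pm by simp
    also have "\<dots> = (\<Sum>t<n. Comp (Xm k \<mu>) $$ (p, j*n + t) * lam a (Suc k + j) $$ (t, qm))"
    proof (rule sum.cong[OF refl])
      fix t assume "t \<in> {..<n}"
      then have t: "t < n" by simp
      have lt: "j*n+t < m*n" by (rule blk_lt[OF j t])
      show "(if t = pm then (if i = j+1 then lam a (Suc k + j) $$ (t, qm) else 0) else 0)
          = Comp (Xm k \<mu>) $$ (p, j*n + t) * lam a (Suc k + j) $$ (t, qm)"
        unfolding Comp_idx[OF p lt] using False t unfolding i_def pm_def by auto
    qed
    finally show ?thesis unfolding LHS RHS .
  qed
qed (auto)

end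

context PM begin

primrec CP :: "complex \<Rightarrow> nat \<Rightarrow> complex mat" where
  "CP \<mu> 0 = 1\<^sub>m (m*n)"
| "CP \<mu> (Suc l) = CP \<mu> l * Comp (Xm l \<mu>)"

lemma CP_carrier[simp]: "CP \<mu> l \<in> carrier_mat (m*n) (m*n)"
  by (induction l) auto

lemma T1:
  assumes invN: "\<And>k. invertible_mat (Nmat n m a k)"
  shows "Qprod n m a 0 l \<mu> * Nm l \<mu> = Nm 0 \<mu> * CP \<mu> l"
proof (induction l)
  case 0
  show ?case using left_mult_one_mat[OF Nm_carrier[of 0 \<mu>]] right_mult_one_mat[OF Nm_carrier[of 0 \<mu>]] by simp
next
  case (Suc l)
  have "Qprod n m a 0 (Suc l) \<mu> * Nm (Suc l) \<mu> = (Qprod n m a 0 l \<mu> * Qmat n m a l \<mu>) * Nm (Suc l) \<mu>"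
    by (simp add: Qprod.simps(2))
  also have "\<dots> = Qprod n m a 0 l \<mu> * (Qmat n m a l \<mu> * Nm (Suc l) \<mu>)"
    by (rule assoc_mult_mat[OF Qprod_carrier Qmat_carrier Nm_carrier])
  also have "Qmat n m a l \<mu> * Nm (Suc l) \<mu> = Nm l \<mu> * Comp (Xm l \<mu>)"
    by (rule L1[OF Xm_carrier NX[OF invN]])
  also have "Qprod n m a 0 l \<mu> * (Nm l \<mu> * Comp (Xm l \<mu>)) = (Qprod n m a 0 l \<mu> * Nm l \<mu>) * Comp (Xm l \<mu>)"
    by (rule assoc_mult_mat[OF Qprod_carrier Nm_carrier Comp_carrier, symmetric])
  also have "\<dots> = (Nm 0 \<mu> * CP \<mu> l) * Comp (Xm l \<mu>)" unfolding Suc ..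
  also have "\<dots> = Nm 0 \<mu> * CP \<mu> (Suc l)"
    by (simp add: assoc_mult_mat[OF Nm_carrier CP_carrier Comp_carrier])
  finally show ?case .
qed

lemma T2:
  assumes invN: "\<And>k. invertible_mat (Nmat n m a k)"
    and Lc: "\<And>j. lam a j \<in> carrier_mat n n" and Li: "\<And>j. invertible_mat (lam a j)"
  shows "Lmat n m (lam a) 0 * Qprod n m (Tmap n m lam a) 0 l \<mu> = CP \<mu> l * Lmat n m (lam a) l"
proof (induction l)
  case 0
  show ?case using left_mult_one_mat[OF Lmat_carrier] right_mult_one_mat[OF Lmat_carrier] by simp
next
  case (Suc l)
  let ?L = "Lmat n m (lam a)" and ?T = "Tmap n m lam a"
  have "?L 0 * Qprod n m ?T 0 (Suc l) \<mu> = ?L 0 * (Qprod n m ?T 0 l \<mu> * Qmat n m ?T l \<mu>)"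
    by (simp add: Qprod.simps(2))
  also have "\<dots> = (?L 0 * Qprod n m ?T 0 l \<mu>) * Qmat n m ?T l \<mu>"
    by (rule assoc_mult_mat[OF Lmat_carrier Qprod_carrier Qmat_carrier, symmetric])
  also have "\<dots> = (CP \<mu> l * ?L l) * Qmat n m ?T l \<mu>" unfolding Suc ..
  also have "\<dots> = CP \<mu> l * (?L l * Qmat n m ?T l \<mu>)"
    by (rule assoc_mult_mat[OF CP_carrier Lmat_carrier Qmat_carrier])
  also have "?L l * Qmat n m ?T l \<mu> = Comp (Xm l \<mu>) * ?L (Suc l)"
    by (rule LQT[where lam=lam, OF invN Lc Li])
  also have "CP \<mu> l * (Comp (Xm l \<mu>) * ?L (Suc l)) = CP \<mu> (Suc l) * ?L (Suc l)"
    by (simp add: assoc_mult_mat[OF CP_carrier Comp_carrier Lmat_carrier])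
  finally show ?case .
qed

lemma det_eq:
  assumes invN: "\<And>k. invertible_mat (Nmat n m a k)"
    and Lc: "\<And>j. lam a j \<in> carrier_mat n n" and Li: "\<And>j. invertible_mat (lam a j)"
    and pera: "\<And>k i. a (k + N) i = a k i" and perl: "\<And>j. lam a (j + N) = lam a j"
  shows "det (Qprod n m (Tmap n m lam a) 0 N \<mu> - \<eta> \<cdot>\<^sub>m 1\<^sub>m (m*n)) * det (Nm 0 \<mu>)
       = det (Qprod n m a 0 N \<mu> - \<eta> \<cdot>\<^sub>m 1\<^sub>m (m*n)) * det (Nm 0 \<mu>)"
proof -
  let ?P = "Qprod n m a 0 N \<mu>" and ?P' = "Qprod n m (Tmap n m lam a) 0 N \<mu>"
  let ?X = "Nm 0 \<mu>" and ?R = "CP \<mu> N" and ?L = "Lmat n m (lam a) 0" and ?I = "1\<^sub>m (m*n) :: complex mat"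
  have Qper: "Qmat n m a (k+N) \<mu>' = Qmat n m a k \<mu>'" for k \<mu>' unfolding Qmat_def by (simp only: pera)
  have Qpper: "Qprod n m a (k+N) l \<mu> = Qprod n m a k l \<mu>" for k l
  proof (induction l)
    case (Suc l)
    have e: "k + N + l = (k + l) + N" by simp
    show ?case using Suc by (simp add: Qprod.simps(2) e Qper)
  qed simp
  have rper: "rvec n m a (k+N) = rvec n m a k" for k unfolding rvec_def by (simp only: pera)
  have Fper: "Fm (k+N) l \<mu> = Fm k l \<mu>" for k l
  proof -
    have e: "k + N + l = (k + l) + N" by simp
    show ?thesis unfolding Fm_def Qpper e rper ..
  qed
  have Nper: "Nm N \<mu> = ?X" unfolding Nm_def using Fper[of 0] by simp
  have perl': "lam a (N + j) = lam a j" for j using perl[of j] by (simp add: add.commute)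
  have Lper: "Lmat n m (lam a) N = ?L" unfolding Lmat_def by (simp only: perl' add_0)
  have PX: "?P * ?X = ?X * ?R" using T1[OF invN, of N \<mu>] Nper by simp
  have LP: "?L * ?P' = ?R * ?L" using T2[where lam=lam, OF invN Lc Li, of N \<mu>] Lper by simp
  have Xc: "?X \<in> carrier_mat (m*n) (m*n)" by simp
  have Ic: "?I \<in> carrier_mat (m*n) (m*n)" by simp
  have eI: "(\<eta> \<cdot>\<^sub>m ?I) * A = \<eta> \<cdot>\<^sub>m A" "A * (\<eta> \<cdot>\<^sub>m ?I) = \<eta> \<cdot>\<^sub>m A" if A: "A \<in> carrier_mat (m*n) (m*n)" for A
    using mult_smult_assoc_mat[OF Ic A, of \<eta>] mult_smult_distrib[OF A Ic, of \<eta>]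
      left_mult_one_mat[OF A] right_mult_one_mat[OF A] by simp_all
  have sIc: "\<eta> \<cdot>\<^sub>m ?I \<in> carrier_mat (m*n) (m*n)" by simp
  have E1: "(?P - \<eta> \<cdot>\<^sub>m ?I) * ?X = ?X * (?R - \<eta> \<cdot>\<^sub>m ?I)"
  proof -
    have "(?P - \<eta> \<cdot>\<^sub>m ?I) * ?X = ?P * ?X - (\<eta> \<cdot>\<^sub>m ?I) * ?X"
      by (rule minus_mult_distrib_mat[OF Qprod_carrier sIc Xc])
    also have "\<dots> = ?X * ?R - \<eta> \<cdot>\<^sub>m ?X" unfolding PX eI[OF Xc] ..
    also have "\<dots> = ?X * ?R - ?X * (\<eta> \<cdot>\<^sub>m ?I)" unfolding eI[OF Xc] ..
    also have "\<dots> = ?X * (?R - \<eta> \<cdot>\<^sub>m ?I)"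
      by (rule mult_minus_distrib_mat[OF Xc CP_carrier sIc, symmetric])
    finally show ?thesis .
  qed
  have E2: "?L * (?P' - \<eta> \<cdot>\<^sub>m ?I) = (?R - \<eta> \<cdot>\<^sub>m ?I) * ?L"
  proof -
    have "?L * (?P' - \<eta> \<cdot>\<^sub>m ?I) = ?L * ?P' - ?L * (\<eta> \<cdot>\<^sub>m ?I)"
      by (rule mult_minus_distrib_mat[OF Lmat_carrier Qprod_carrier sIc])
    also have "\<dots> = ?R * ?L - \<eta> \<cdot>\<^sub>m ?L" unfolding LP eI[OF Lmat_carrier] ..
    also have "\<dots> = ?R * ?L - (\<eta> \<cdot>\<^sub>m ?I) * ?L" unfolding eI[OF Lmat_carrier] ..
    also have "\<dots> = (?R - \<eta> \<cdot>\<^sub>m ?I) * ?L"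
      by (rule minus_mult_distrib_mat[OF CP_carrier sIc Lmat_carrier, symmetric])
    finally show ?thesis .
  qed
  have Pc: "?P - \<eta> \<cdot>\<^sub>m ?I \<in> carrier_mat (m*n) (m*n)" by (rule minus_carrier_mat[OF sIc])
  have P'c: "?P' - \<eta> \<cdot>\<^sub>m ?I \<in> carrier_mat (m*n) (m*n)" by (rule minus_carrier_mat[OF sIc])
  have Rc: "?R - \<eta> \<cdot>\<^sub>m ?I \<in> carrier_mat (m*n) (m*n)" by (rule minus_carrier_mat[OF sIc])
  have D1: "det (?P - \<eta> \<cdot>\<^sub>m ?I) * det ?X = det ?X * det (?R - \<eta> \<cdot>\<^sub>m ?I)"
    using arg_cong[OF E1, of det] det_mult[OF Pc Xc] det_mult[OF Xc Rc] by simp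
  have D2: "det ?L * det (?P' - \<eta> \<cdot>\<^sub>m ?I) = det (?R - \<eta> \<cdot>\<^sub>m ?I) * det ?L"
    using arg_cong[OF E2, of det] det_mult[OF Lmat_carrier P'c] det_mult[OF Rc Lmat_carrier] by simp
  have "det ?L \<noteq> 0" by (rule det_inv_nz[OF Lmat_carrier Lmat_invertible(3)[OF Lc Li]])
  then have D3: "det (?P' - \<eta> \<cdot>\<^sub>m ?I) = det (?R - \<eta> \<cdot>\<^sub>m ?I)" using D2 by (simp add: mult.commute)
  show ?thesis unfolding D3 using D1 by (metis mult.commute)
qed

end

definition polyfun :: "(complex \<Rightarrow> complex) \<Rightarrow> bool" where
  "polyfun f \<longleftrightarrow> (\<exists>p. \<forall>x. f x = poly p x)"

lemma pf_const[intro]: "polyfun (\<lambda>x. c)"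
  unfolding polyfun_def by (rule exI[of _ "[:c:]"]) simp
lemma pf_id[intro]: "polyfun (\<lambda>x. x)"
  unfolding polyfun_def by (rule exI[of _ "[:0,1:]"]) simp
lemma pf_add[intro]: "polyfun f \<Longrightarrow> polyfun g \<Longrightarrow> polyfun (\<lambda>x. f x + g x)"
  unfolding polyfun_def by (metis poly_add)
lemma pf_diff[intro]: "polyfun f \<Longrightarrow> polyfun g \<Longrightarrow> polyfun (\<lambda>x. f x - g x)"
  unfolding polyfun_def by (metis poly_diff)
lemma pf_mult[intro]: "polyfun f \<Longrightarrow> polyfun g \<Longrightarrow> polyfun (\<lambda>x. f x * g x)"
  unfolding polyfun_def by (metis poly_mult)
lemma pf_if[intro]: "polyfun f \<Longrightarrow> polyfun g \<Longrightarrow> polyfun (\<lambda>x. if P then f x else g x)"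
  by (cases P) auto
lemma pf_sum: "finite S \<Longrightarrow> (\<And>i. i \<in> S \<Longrightarrow> polyfun (f i)) \<Longrightarrow> polyfun (\<lambda>x. \<Sum>i\<in>S. f i x)"
proof (induction S rule: finite_induct)
  case empty then show ?case by (simp add: pf_const)
next
  case (insert a S)
  then show ?case using pf_add[of "f a" "\<lambda>x. \<Sum>i\<in>S. f i x"] by simp
qed
lemma pf_prod: "finite S \<Longrightarrow> (\<And>i. i \<in> S \<Longrightarrow> polyfun (f i)) \<Longrightarrow> polyfun (\<lambda>x. \<Prod>i\<in>S. f i x)"
proof (induction S rule: finite_induct)
  case empty then show ?case by (simp add: pf_const)
next
  case (insert a S)
  then show ?case using pf_mult[of "f a" "\<lambda>x. \<Prod>i\<in>S. f i x"] by simp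
qed

lemma pf_det:
  assumes A: "\<And>x. A x \<in> carrier_mat d d" and e: "\<And>i j. i < d \<Longrightarrow> j < d \<Longrightarrow> polyfun (\<lambda>x. A x $$ (i,j))"
  shows "polyfun (\<lambda>x. det (A x))"
proof -
  have "det (A x) = (\<Sum>p\<in>{p. p permutes {0..<d}}. signof p * (\<Prod>i=0..<d. A x $$ (i, p i)))" for x
    using A[of x] unfolding det_def by auto
  moreover have "polyfun (\<lambda>x. \<Sum>p\<in>{p. p permutes {0..<d}}. signof p * (\<Prod>i=0..<d. A x $$ (i, p i)))"
  proof (rule pf_sum)
    show "finite {p. p permutes {0..<d}}" by (rule finite_permutations) simp
    fix p assume "p \<in> {p. p permutes {0..<d}}"
    then have pp: "p permutes {0..<d}" by simp
    show "polyfun (\<lambda>x. signof p * (\<Prod>i=0..<d. A x $$ (i, p i)))"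
    proof (rule pf_mult[OF pf_const])
      show "polyfun (\<lambda>x. \<Prod>i=0..<d. A x $$ (i, p i))"
      proof (rule pf_prod)
        fix i assume "i \<in> {0..<d}"
        then have "i < d" "p i < d" using permutes_in_image[OF pp, of i] by auto
        then show "polyfun (\<lambda>x. A x $$ (i, p i))" by (rule e)
      qed simp
    qed
  qed
  ultimately show ?thesis by simp
qed

lemma pf_matmult:
  assumes A: "\<And>x. A x \<in> carrier_mat d e" and B: "\<And>x. B x \<in> carrier_mat e f"
    and eA: "\<And>i j. i < d \<Longrightarrow> j < e \<Longrightarrow> polyfun (\<lambda>x. A x $$ (i,j))"
    and eB: "\<And>i j. i < e \<Longrightarrow> j < f \<Longrightarrow> polyfun (\<lambda>x. B x $$ (i,j))"
    and i: "i < d" and j: "j < f"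
  shows "polyfun (\<lambda>x. (A x * B x) $$ (i,j))"
proof -
  have "(A x * B x) $$ (i,j) = (\<Sum>r\<in>{..<e}. A x $$ (i,r) * B x $$ (r,j))" for x
    by (rule mult_entry[OF A B i j])
  moreover have "polyfun (\<lambda>x. \<Sum>r\<in>{..<e}. A x $$ (i,r) * B x $$ (r,j))"
    by (rule pf_sum) (auto intro!: pf_mult eA eB i j)
  ultimately show ?thesis by simp
qed

lemma pf_Qmat: assumes "i < m*n" "j < m*n" shows "polyfun (\<lambda>\<mu>. Qmat n m b k \<mu> $$ (i,j))"
proof -
  have "Qmat n m b k \<mu> $$ (i,j) = (if j div n = m - 1 then (if odd (i div n) then \<mu> else 1) * (b k (i div n) $$ (i mod n, j mod n))
     else if i div n = j div n + 1 \<and> i mod n = j mod n then 1 else 0)" for \<mu>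
    using assms by (simp add: Qmat_def)
  moreover have "polyfun (\<lambda>\<mu>. if j div n = m - 1 then (if odd (i div n) then \<mu> else 1) * (b k (i div n) $$ (i mod n, j mod n))
     else if i div n = j div n + 1 \<and> i mod n = j mod n then 1 else 0)"
    by (intro pf_if pf_mult pf_id pf_const)
  ultimately show ?thesis by simp
qed

lemma pf_Qprod: assumes "i < m*n" "j < m*n" shows "polyfun (\<lambda>\<mu>. Qprod n m b k l \<mu> $$ (i,j))"
  using assms
proof (induction l arbitrary: i j)
  case 0 then show ?case by (simp add: pf_const)
next
  case (Suc l)
  show ?case unfolding Qprod.simps(2)
    by (rule pf_matmult[OF Qprod_carrier Qmat_carrier _ _ Suc.prems]) (auto intro: Suc.IH pf_Qmat)
qed


theorem mainTheorem5:
  fixes n s N :: nat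
    and a :: coords
    and lam :: "coords \<Rightarrow> nat \<Rightarrow> complex mat"
    and \<mu> \<eta> :: complex
  assumes "n \<ge> 1" and "s \<ge> 2" and "N \<ge> 1"
    and "\<And>k i. a k i \<in> carrier_mat n n"
    and "\<And>k i. a (k + N) i = a k i"
    and "\<And>k. invertible_mat (Nmat n (2*s) a k)"
    and "\<And>b k. (\<And>j i. b (j + N) i = b j i) \<Longrightarrow> lam b (k + N) = lam b k"
    and "\<And>b c k. c \<noteq> 0 \<Longrightarrow> lam (scale_odd c b) k = (1 / c) \<cdot>\<^sub>m lam b k"
    and "\<And>k. lam a k \<in> carrier_mat n n"
    and "\<And>k. invertible_mat (lam a k)"
    and "\<mu> \<noteq> 0"
  shows "det (Qprod n (2*s) (Tmap n (2*s) lam a) 0 N \<mu> - \<eta> \<cdot>\<^sub>m 1\<^sub>m (2*s*n))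
       = det (Qprod n (2*s) a 0 N \<mu> - \<eta> \<cdot>\<^sub>m 1\<^sub>m (2*s*n))"
proof -
  interpret PM n "2*s" a
    using assms(1,2,4) by unfold_locales auto
  have invN: "\<And>k. invertible_mat (Nmat n (2*s) a k)" by (rule assms(6))
  have perl: "\<And>j. lam a (j + N) = lam a j" by (rule assms(7)) (rule assms(5))
  define f where "f x = det (Qprod n (2*s) (Tmap n (2*s) lam a) 0 N x - \<eta> \<cdot>\<^sub>m 1\<^sub>m (2*s*n))
       - det (Qprod n (2*s) a 0 N x - \<eta> \<cdot>\<^sub>m 1\<^sub>m (2*s*n))" for x
  define g where "g x = det (Nm 0 x)" for x
  have fg: "f x * g x = 0" for x
    using det_eq[where lam=lam, OF invN assms(9) assms(10) assms(5) perl, of x \<eta>]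
    unfolding f_def g_def by (simp add: algebra_simps)
  have Ic: "\<eta> \<cdot>\<^sub>m 1\<^sub>m (2*s*n) \<in> carrier_mat (2*s*n) (2*s*n)" by simp
  have pfQ: "polyfun (\<lambda>x. det (Qprod n (2*s) b 0 N x - \<eta> \<cdot>\<^sub>m 1\<^sub>m (2*s*n)))" for b
  proof (rule pf_det)
    show "\<And>x. Qprod n (2*s) b 0 N x - \<eta> \<cdot>\<^sub>m 1\<^sub>m (2*s*n) \<in> carrier_mat (2*s*n) (2*s*n)"
      by (rule minus_carrier_mat[OF Ic])
    fix i j assume ij: "i < 2*s*n" "j < 2*s*n"
    have "(Qprod n (2*s) b 0 N x - \<eta> \<cdot>\<^sub>m 1\<^sub>m (2*s*n)) $$ (i,j) = Qprod n (2*s) b 0 N x $$ (i,j) - \<eta> * (if i = j then 1 else 0)" for x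
      using ij by simp
    moreover have "polyfun (\<lambda>x. Qprod n (2*s) b 0 N x $$ (i,j) - \<eta> * (if i = j then 1 else 0))"
      by (rule pf_diff[OF pf_Qprod[OF ij] pf_const])
    ultimately show "polyfun (\<lambda>x. (Qprod n (2*s) b 0 N x - \<eta> \<cdot>\<^sub>m 1\<^sub>m (2*s*n)) $$ (i,j))" by simp
  qed
  have pff: "polyfun f" unfolding f_def by (rule pf_diff[OF pfQ pfQ])
  have pfg: "polyfun g" unfolding g_def
  proof (rule pf_det[OF Nm_carrier])
    fix i j assume ij: "i < 2*s*n" "j < 2*s*n"
    have "Nm 0 x $$ (i,j) = (Qprod n (2*s) a 0 (j div n) x * rvec n (2*s) a (0 + j div n)) $$ (i, j mod n)" for x
      unfolding Nm_idx[OF ij] Fm_def by (rule refl)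
    moreover have "polyfun (\<lambda>x. (Qprod n (2*s) a 0 (j div n) x * rvec n (2*s) a (0 + j div n)) $$ (i, j mod n))"
      by (rule pf_matmult[OF Qprod_carrier rvec_carrier _ _ ij(1) mod_lt[OF ij(2)]])
        (auto intro: pf_Qprod pf_const)
    ultimately show "polyfun (\<lambda>x. Nm 0 x $$ (i,j))" by simp
  qed
  obtain pf where pf: "\<And>x. f x = poly pf x" using pff unfolding polyfun_def by blast
  obtain pg where pg: "\<And>x. g x = poly pg x" using pfg unfolding polyfun_def by blast
  have "\<forall>x. poly (pf * pg) x = 0" using fg pf pg by simp
  then have pfg0: "pf * pg = 0" by (simp only: poly_all_0_iff_0)
  have "g 1 \<noteq> 0" unfolding g_def Nm1 by (rule det_inv_nz[OF Nmat_carrier invN])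
  then have "pg \<noteq> 0" using pg[of 1] by auto
  then have "pf = 0" using pfg0 by simp
  then have "f \<mu> = 0" using pf by simp
  then show ?thesis unfolding f_def by simp
qed

end
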